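(* Let $\mathcal T$ be a pre-triangulated category. Then $\mathrm{fpc}(\mathcal T)\le cx(\mathcal T)$.
   Context: $\Bbbk$ is an algebraically closed field and $\mathcal T$ is $\Bbbk$-linear with suspension $\Sigma$. For a real number $d$, ${}_d\mathcal T=\{X\in\mathcal T:\lim_{n\to\infty}\dim_\Bbbk\mathrm{Hom}_{\mathcal T}(X,\Sigma^nY)/n^{d-1}=0\text{ for all }Y\in\mathcal T\}$, and $cx(\mathcal T)=\inf\{d:{}_d\mathcal T=\mathcal T\}$. An atomic object is $M$ with $\mathrm{Hom}(M,M)=\Bbbk$ and $\mathrm{Hom}(M,\Sigma^{-i}M)=0$ for $i>0$; an atomic set is a finite set $\phi=\{X_1,\dots,X_m\}$ of nonzero atomic objects with $\dim\mathrm{Hom}(X_i,X_j)=\delta_{ij}$. With $A(\phi,\Sigma^n)=(\dim\mathrm{Hom}(X_i,\Sigma^nX_j))_{i,j}$ and $\rho$ the spectral radius (entries $\pm\infty$ replaced by real variables $\pm x_{ij}$ with $\liminf$ as all $x_{ij}\to\infty$), $\mathrm{fpg}(\Sigma)=\sup_\phi\limsup_{n\to\infty}\log_n\rho(A(\phi,\Sigma^n))$ over atomic sets ($\log_n0=-\infty$), and $\mathrm{fpc}(\mathcal T)=\mathrm{fpg}(\Sigma)+1$. *)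

theory Defs
  imports "Jordan_Normal_Form.Spectral_Radius" "HOL-Library.Extended_Real"
    "HOL-Computational_Algebra.Polynomial"
begin

text \<open>Objects of type 'o, morphisms of type 'm, scalars of type 'k.
  cmp g f is the composite g after f; zer X Y is the zero morphism X to Y;
  Sob / Smor is the suspension on objects / morphisms;
  Tri is the class of distinguished triangles (X, Y, Z, u, v, w)
  with u : X to Y, v : Y to Z, w : Z to Sigma X.\<close>

record ('o, 'm, 'k) kcat =
  Ob   :: "'o set"
  Hom  :: "'o \<Rightarrow> 'o \<Rightarrow> 'm set"
  cmp  :: "'m \<Rightarrow> 'm \<Rightarrow> 'm"
  idm  :: "'o \<Rightarrow> 'm"
  zer  :: "'o \<Rightarrow> 'o \<Rightarrow> 'm"
  pls  :: "'m \<Rightarrow> 'm \<Rightarrow> 'm"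
  scl  :: "'k \<Rightarrow> 'm \<Rightarrow> 'm"
  Sob  :: "'o \<Rightarrow> 'o"
  Smor :: "'m \<Rightarrow> 'm"
  Tri  :: "('o \<times> 'o \<times> 'o \<times> 'm \<times> 'm \<times> 'm) set"

definition alg_closed :: "'k::field itself \<Rightarrow> bool" where
  "alg_closed _ \<longleftrightarrow> (\<forall>p :: 'k poly. degree p > 0 \<longrightarrow> (\<exists>x. poly p x = 0))"

definition is_category :: "('o, 'm, 'k) kcat \<Rightarrow> bool" where
  "is_category C \<longleftrightarrow>
     (\<forall>X Y X' Y'. (X, Y) \<noteq> (X', Y') \<longrightarrow> Hom C X Y \<inter> Hom C X' Y' = {}) \<and>
     (\<forall>X\<in>Ob C. \<forall>Y\<in>Ob C. \<forall>Z\<in>Ob C. \<forall>f\<in>Hom C X Y. \<forall>g\<in>Hom C Y Z. cmp C g f \<in> Hom C X Z) \<and>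
     (\<forall>X\<in>Ob C. \<forall>Y\<in>Ob C. \<forall>Z\<in>Ob C. \<forall>W\<in>Ob C. \<forall>f\<in>Hom C X Y. \<forall>g\<in>Hom C Y Z. \<forall>h\<in>Hom C Z W.
        cmp C h (cmp C g f) = cmp C (cmp C h g) f) \<and>
     (\<forall>X\<in>Ob C. idm C X \<in> Hom C X X) \<and>
     (\<forall>X\<in>Ob C. \<forall>Y\<in>Ob C. \<forall>f\<in>Hom C X Y. cmp C f (idm C X) = f \<and> cmp C (idm C Y) f = f)"

definition is_klinear :: "('o, 'm, 'k::field) kcat \<Rightarrow> bool" where
  "is_klinear C \<longleftrightarrow> is_category C \<and>
     (\<forall>X\<in>Ob C. \<forall>Y\<in>Ob C.
        zer C X Y \<in> Hom C X Y \<and>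
        (\<forall>f\<in>Hom C X Y. \<forall>g\<in>Hom C X Y. pls C f g \<in> Hom C X Y) \<and>
        (\<forall>a. \<forall>f\<in>Hom C X Y. scl C a f \<in> Hom C X Y) \<and>
        (\<forall>f\<in>Hom C X Y. \<forall>g\<in>Hom C X Y. \<forall>h\<in>Hom C X Y. pls C (pls C f g) h = pls C f (pls C g h)) \<and>
        (\<forall>f\<in>Hom C X Y. \<forall>g\<in>Hom C X Y. pls C f g = pls C g f) \<and>
        (\<forall>f\<in>Hom C X Y. pls C f (zer C X Y) = f) \<and>
        (\<forall>f\<in>Hom C X Y. pls C f (scl C (-1) f) = zer C X Y) \<and>
        (\<forall>a b. \<forall>f\<in>Hom C X Y. scl C a (scl C b f) = scl C (a * b) f) \<and>
        (\<forall>f\<in>Hom C X Y. scl C 1 f = f) \<and>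
        (\<forall>a b. \<forall>f\<in>Hom C X Y. scl C (a + b) f = pls C (scl C a f) (scl C b f)) \<and>
        (\<forall>a. \<forall>f\<in>Hom C X Y. \<forall>g\<in>Hom C X Y. scl C a (pls C f g) = pls C (scl C a f) (scl C a g))) \<and>
     (\<forall>X\<in>Ob C. \<forall>Y\<in>Ob C. \<forall>Z\<in>Ob C. \<forall>a.
        (\<forall>f\<in>Hom C X Y. \<forall>f'\<in>Hom C X Y. \<forall>g\<in>Hom C Y Z.
           cmp C g (pls C f f') = pls C (cmp C g f) (cmp C g f') \<and>
           cmp C g (scl C a f) = scl C a (cmp C g f)) \<and>
        (\<forall>f\<in>Hom C X Y. \<forall>g\<in>Hom C Y Z. \<forall>g'\<in>Hom C Y Z.
           cmp C (pls C g g') f = pls C (cmp C g f) (cmp C g' f) \<and>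
           cmp C (scl C a g) f = scl C a (cmp C g f)))"

definition zero_obj :: "('o, 'm, 'k) kcat \<Rightarrow> 'o \<Rightarrow> bool" where
  "zero_obj C Z \<longleftrightarrow> Z \<in> Ob C \<and> Hom C Z Z = {idm C Z} \<and> idm C Z = zer C Z Z"

definition is_additive :: "('o, 'm, 'k::field) kcat \<Rightarrow> bool" where
  "is_additive C \<longleftrightarrow> is_klinear C \<and> (\<exists>Z. zero_obj C Z) \<and>
     (\<forall>X\<in>Ob C. \<forall>Y\<in>Ob C. \<exists>B\<in>Ob C. \<exists>i1\<in>Hom C X B. \<exists>i2\<in>Hom C Y B. \<exists>p1\<in>Hom C B X. \<exists>p2\<in>Hom C B Y.
        cmp C p1 i1 = idm C X \<and> cmp C p2 i2 = idm C Y \<and>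
        cmp C p1 i2 = zer C Y X \<and> cmp C p2 i1 = zer C X Y \<and>
        pls C (cmp C i1 p1) (cmp C i2 p2) = idm C B)"

definition is_iso :: "('o, 'm, 'k) kcat \<Rightarrow> 'o \<Rightarrow> 'o \<Rightarrow> 'm \<Rightarrow> bool" where
  "is_iso C X Y f \<longleftrightarrow> f \<in> Hom C X Y \<and>
     (\<exists>g\<in>Hom C Y X. cmp C g f = idm C X \<and> cmp C f g = idm C Y)"

definition is_suspension :: "('o, 'm, 'k::field) kcat \<Rightarrow> bool" where
  "is_suspension C \<longleftrightarrow>
     bij_betw (Sob C) (Ob C) (Ob C) \<and>
     (\<forall>X\<in>Ob C. \<forall>Y\<in>Ob C. bij_betw (Smor C) (Hom C X Y) (Hom C (Sob C X) (Sob C Y))) \<and>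
     (\<forall>X\<in>Ob C. Smor C (idm C X) = idm C (Sob C X)) \<and>
     (\<forall>X\<in>Ob C. \<forall>Y\<in>Ob C. \<forall>Z\<in>Ob C. \<forall>f\<in>Hom C X Y. \<forall>g\<in>Hom C Y Z.
        Smor C (cmp C g f) = cmp C (Smor C g) (Smor C f)) \<and>
     (\<forall>X\<in>Ob C. \<forall>Y\<in>Ob C. \<forall>a. \<forall>f\<in>Hom C X Y. \<forall>g\<in>Hom C X Y.
        Smor C (pls C f g) = pls C (Smor C f) (Smor C g) \<and>
        Smor C (scl C a f) = scl C a (Smor C f))"

definition is_triangle :: "('o, 'm, 'k) kcat \<Rightarrow> 'o \<times> 'o \<times> 'o \<times> 'm \<times> 'm \<times> 'm \<Rightarrow> bool" where
  "is_triangle C T \<longleftrightarrow> (case T of (X, Y, Z, u, v, w) \<Rightarrow>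
     X \<in> Ob C \<and> Y \<in> Ob C \<and> Z \<in> Ob C \<and>
     u \<in> Hom C X Y \<and> v \<in> Hom C Y Z \<and> w \<in> Hom C Z (Sob C X))"

definition pretriangulated :: "('o, 'm, 'k::field) kcat \<Rightarrow> bool" where
  "pretriangulated C \<longleftrightarrow> is_additive C \<and> is_suspension C \<and>
     (\<forall>T\<in>Tri C. is_triangle C T) \<and>
     \<comment> \<open>TR1 (a): closed under isomorphisms of triangles\<close>
     (\<forall>X Y Z u v w X' Y' Z' u' v' w' a b c.
        (X, Y, Z, u, v, w) \<in> Tri C \<and> is_triangle C (X', Y', Z', u', v', w') \<and>
        is_iso C X X' a \<and> is_iso C Y Y' b \<and> is_iso C Z Z' c \<and>
        cmp C b u = cmp C u' a \<and> cmp C c v = cmp C v' b \<and>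
        cmp C (Smor C a) w = cmp C w' c
        \<longrightarrow> (X', Y', Z', u', v', w') \<in> Tri C) \<and>
     \<comment> \<open>TR1 (b): X to X to 0 to Sigma X is distinguished\<close>
     (\<forall>X\<in>Ob C. \<forall>Z. zero_obj C Z \<longrightarrow>
        (X, X, Z, idm C X, zer C X Z, zer C Z (Sob C X)) \<in> Tri C) \<and>
     \<comment> \<open>TR1 (c): every morphism extends to a distinguished triangle\<close>
     (\<forall>X\<in>Ob C. \<forall>Y\<in>Ob C. \<forall>u\<in>Hom C X Y. \<exists>Z v w. (X, Y, Z, u, v, w) \<in> Tri C) \<and>
     \<comment> \<open>TR2: rotation\<close>
     (\<forall>X Y Z u v w. is_triangle C (X, Y, Z, u, v, w) \<longrightarrow>
        ((X, Y, Z, u, v, w) \<in> Tri C \<longleftrightarrow>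
         (Y, Z, Sob C X, v, w, scl C (-1) (Smor C u)) \<in> Tri C)) \<and>
     \<comment> \<open>TR3: morphism completion\<close>
     (\<forall>X Y Z u v w X' Y' Z' u' v' w' f g.
        (X, Y, Z, u, v, w) \<in> Tri C \<and> (X', Y', Z', u', v', w') \<in> Tri C \<and>
        f \<in> Hom C X X' \<and> g \<in> Hom C Y Y' \<and> cmp C g u = cmp C u' f
        \<longrightarrow> (\<exists>h\<in>Hom C Z Z'. cmp C h v = cmp C v' g \<and> cmp C (Smor C f) w = cmp C w' h))"

fun lcomb :: "('o, 'm, 'k) kcat \<Rightarrow> 'o \<Rightarrow> 'o \<Rightarrow> ('m \<Rightarrow> 'k) \<Rightarrow> 'm list \<Rightarrow> 'm" where
  "lcomb C X Y c [] = zer C X Y"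
| "lcomb C X Y c (f # fs) = pls C (scl C (c f) f) (lcomb C X Y c fs)"

definition lin_indep :: "('o, 'm, 'k::field) kcat \<Rightarrow> 'o \<Rightarrow> 'o \<Rightarrow> 'm list \<Rightarrow> bool" where
  "lin_indep C X Y fs \<longleftrightarrow> distinct fs \<and> set fs \<subseteq> Hom C X Y \<and>
     (\<forall>c. lcomb C X Y c fs = zer C X Y \<longrightarrow> (\<forall>f\<in>set fs. c f = 0))"

definition hdim :: "('o, 'm, 'k::field) kcat \<Rightarrow> 'o \<Rightarrow> 'o \<Rightarrow> enat" where
  "hdim C X Y = (SUP fs \<in> {fs. lin_indep C X Y fs}. enat (length fs))"

section \<open>Complexity\<close>

definition in_dT :: "('o, 'm, 'k::field) kcat \<Rightarrow> real \<Rightarrow> 'o \<Rightarrow> bool" where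
  "in_dT C d X \<longleftrightarrow> (\<forall>Y\<in>Ob C.
     ((\<lambda>n::nat. ereal_of_enat (hdim C X ((Sob C ^^ n) Y)) / ereal (real n powr (d - 1)))
        \<longlongrightarrow> 0) sequentially)"

definition cx :: "('o, 'm, 'k::field) kcat \<Rightarrow> ereal" where
  "cx C = Inf {ereal d | d. \<forall>X\<in>Ob C. in_dT C d X}"

section \<open>Frobenius-Perron complexity\<close>

definition Sinv :: "('o, 'm, 'k) kcat \<Rightarrow> 'o \<Rightarrow> 'o" where
  "Sinv C = inv_into (Ob C) (Sob C)"

definition atomic :: "('o, 'm, 'k::field) kcat \<Rightarrow> 'o \<Rightarrow> bool" where
  "atomic C M \<longleftrightarrow> M \<in> Ob C \<and> hdim C M M = 1 \<and>
     (\<forall>i::nat. i > 0 \<longrightarrow> hdim C M ((Sinv C ^^ i) M) = 0)"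

definition atomic_set :: "('o, 'm, 'k::field) kcat \<Rightarrow> 'o list \<Rightarrow> bool" where
  "atomic_set C xs \<longleftrightarrow> xs \<noteq> [] \<and> distinct xs \<and>
     (\<forall>X\<in>set xs. atomic C X \<and> idm C X \<noteq> zer C X X) \<and>
     (\<forall>i<length xs. \<forall>j<length xs. hdim C (xs ! i) (xs ! j) = (if i = j then 1 else 0))"

definition all_to_infty :: "(nat \<Rightarrow> nat \<Rightarrow> real) filter" where
  "all_to_infty = (INF B. principal {x. \<forall>i j. B \<le> x i j})"

text \<open>The matrix A(phi, Sigma^n) with infinite entries replaced by the variables x_ij.\<close>
definition Amat :: "('o, 'm, 'k::field) kcat \<Rightarrow> 'o list \<Rightarrow> nat \<Rightarrow> (nat \<Rightarrow> nat \<Rightarrow> real) \<Rightarrow> complex mat" where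
  "Amat C xs n x = mat (length xs) (length xs) (\<lambda>(i, j).
     (case hdim C (xs ! i) ((Sob C ^^ n) (xs ! j)) of
        enat k \<Rightarrow> complex_of_real (real k)
      | \<infinity> \<Rightarrow> complex_of_real (x i j)))"

definition rho :: "('o, 'm, 'k::field) kcat \<Rightarrow> 'o list \<Rightarrow> nat \<Rightarrow> ereal" where
  "rho C xs n = Liminf all_to_infty (\<lambda>x. ereal (spectral_radius (Amat C xs n x)))"

text \<open>log base n, with log_n 0 = -infinity and log_n infinity = infinity.\<close>
definition logn :: "nat \<Rightarrow> ereal \<Rightarrow> ereal" where
  "logn n r = (if r = 0 then -\<infinity> else if r = \<infinity> then \<infinity>
               else ereal (log (real n) (real_of_ereal r)))"

definition fpg :: "('o, 'm, 'k::field) kcat \<Rightarrow> ereal" where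
  "fpg C = (SUP xs \<in> {xs. atomic_set C xs}. limsup (\<lambda>n. logn n (rho C xs n)))"

definition fpc :: "('o, 'm, 'k::field) kcat \<Rightarrow> ereal" where
  "fpc C = fpg C + 1"

end

theory Submission
  imports Defs "HOL-Real_Asymp.Real_Asymp"
begin

lemma spec_bound:
  fixes A :: "complex mat"
  assumes A: "A \<in> carrier_mat m m" and m: "m > 0"
    and b: "\<And>i j. i < m \<Longrightarrow> j < m \<Longrightarrow> norm (A $$ (i, j)) \<le> c"
  shows "spectral_radius A \<le> real m * c"
proof -
  from spectral_radius_mem_max(1)[OF A m] obtain l where
    l: "l \<in> spectrum A" and sr: "spectral_radius A = norm l" by auto
  from l obtain v where ev: "eigenvector A v l"
    unfolding spectrum_def eigenvalue_def by auto
  hence vc: "v \<in> carrier_vec m" and vn: "v \<noteq> 0\<^sub>v m" and Av: "A *\<^sub>v v = l \<cdot>\<^sub>v v"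
    using A unfolding eigenvector_def by auto
  define N where "N = Max ((\<lambda>j. norm (v $ j)) ` {0..<m})"
  have fin: "finite ((\<lambda>j. norm (v $ j)) ` {0..<m})" by auto
  have ne: "(\<lambda>j. norm (v $ j)) ` {0..<m} \<noteq> {}" using m by auto
  from Max_in[OF fin ne] obtain i where i: "i < m" and Ni: "N = norm (v $ i)"
    unfolding N_def by auto
  have Nj: "norm (v $ j) \<le> N" if "j < m" for j
    unfolding N_def using fin that by (intro Max_ge) auto
  have Npos: "N > 0"
  proof (rule ccontr)
    assume "\<not> N > 0"
    hence "\<And>j. j < m \<Longrightarrow> v $ j = 0" using Nj
      by (metis norm_le_zero_iff order_trans not_less)
    hence "v = 0\<^sub>v m" using vc by (intro eq_vecI) auto
    with vn show False by simp
  qed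
  have "(A *\<^sub>v v) $ i = (\<Sum>j = 0..<m. A $$ (i, j) * v $ j)"
    using A vc i by (simp add: scalar_prod_def)
  moreover have "(A *\<^sub>v v) $ i = l * v $ i" using Av vc i by simp
  ultimately have eq: "l * v $ i = (\<Sum>j = 0..<m. A $$ (i, j) * v $ j)" by simp
  have "norm l * N = norm (\<Sum>j = 0..<m. A $$ (i, j) * v $ j)"
    using eq Ni by (metis norm_mult)
  also have "\<dots> \<le> (\<Sum>j = 0..<m. norm (A $$ (i, j) * v $ j))"
    by (rule norm_sum)
  also have "\<dots> \<le> (\<Sum>j = 0..<m. c * N)"
  proof (rule sum_mono)
    fix j assume "j \<in> {0..<m}"
    hence j: "j < m" by auto
    have "norm (A $$ (i, j) * v $ j) = norm (A $$ (i, j)) * norm (v $ j)" by (simp add: norm_mult)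
    also have "\<dots> \<le> c * N"
      by (intro mult_mono b i j Nj) (use b[OF i j] in \<open>auto intro: order_trans[OF norm_ge_zero]\<close>)
    finally show "norm (A $$ (i, j) * v $ j) \<le> c * N" .
  qed
  also have "\<dots> = real m * c * N" by simp
  finally have "norm l * N \<le> real m * c * N" .
  with Npos have "norm l \<le> real m * c" by simp
  thus ?thesis using sr by simp
qed

lemma all_to_infty_nonbot: "all_to_infty \<noteq> bot"
proof
  assume "all_to_infty = bot"
  hence "eventually (\<lambda>x. False) all_to_infty" by simp
  hence "\<exists>B\<in>UNIV. eventually (\<lambda>x. False) (principal {x::nat\<Rightarrow>nat\<Rightarrow>real. \<forall>i j. B \<le> x i j})"
    unfolding all_to_infty_def
  proof (subst (asm) eventually_INF_base)
    fix a b :: real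
    show "\<exists>x\<in>UNIV. principal {xa. \<forall>i j. x \<le> xa i j} \<le> inf (principal {x. \<forall>i j. a \<le> x i j}) (principal {x. \<forall>i j. b \<le> x i j})"
      by (rule bexI[of _ "max a b"]) auto
  qed simp_all
  then obtain B where "eventually (\<lambda>x. False) (principal {x::nat\<Rightarrow>nat\<Rightarrow>real. \<forall>i j. B \<le> x i j})" by blast
  hence "{x::nat\<Rightarrow>nat\<Rightarrow>real. \<forall>i j. B \<le> x i j} = {}" by (simp add: eventually_principal)
  moreover have "(\<lambda>i j. B) \<in> {x::nat\<Rightarrow>nat\<Rightarrow>real. \<forall>i j. B \<le> x i j}" by simp
  ultimately show False by (metis empty_iff)
qed


lemma entry_bound:
  fixes C :: "('o, 'm, 'k::field) kcat"
  assumes lim: "((\<lambda>n::nat. ereal_of_enat (hdim C X ((Sob C ^^ n) Y)) / ereal (real n powr (d - 1))) \<longlongrightarrow> 0) sequentially"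
  shows "eventually (\<lambda>n. \<exists>k. hdim C X ((Sob C ^^ n) Y) = enat k \<and> real k \<le> real n powr (d - 1)) sequentially"
proof -
  have "eventually (\<lambda>n. ereal_of_enat (hdim C X ((Sob C ^^ n) Y)) / ereal (real n powr (d - 1)) < 1) sequentially"
    using lim by (rule order_tendstoD(2)) simp
  moreover have "eventually (\<lambda>n::nat. n \<ge> 1) sequentially" by (rule eventually_ge_at_top)
  ultimately show ?thesis
  proof eventually_elim
    case (elim n)
    have p: "real n powr (d - 1) > 0" using elim(2) by simp
    show ?case
    proof (cases "hdim C X ((Sob C ^^ n) Y)")
      case (enat k)
      with elim(1) p have "real k / real n powr (d - 1) < 1" by simp
      with p have "real k < real n powr (d - 1)" by (simp add: field_simps)
      with enat show ?thesis by auto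
    next
      case infinity
      with elim(1) p show ?thesis by simp
    qed
  qed
qed

lemma key:
  fixes C :: "('o, 'm, 'k::field) kcat"
  assumes at: "atomic_set C xs" and dT: "\<forall>X\<in>Ob C. in_dT C d X"
  shows "limsup (\<lambda>n. logn n (rho C xs n)) \<le> ereal (d - 1)"
proof -
  define m where "m = length xs"
  have m: "m > 0" using at unfolding atomic_set_def m_def by auto
  have ob: "xs ! i \<in> Ob C" if "i < m" for i
    using at that unfolding atomic_set_def atomic_def m_def by auto
  define G where "G = (\<lambda>n. \<forall>p\<in>{0..<m} \<times> {0..<m}. \<exists>k. hdim C (xs ! fst p) ((Sob C ^^ n) (xs ! snd p)) = enat k \<and> real k \<le> real n powr (d - 1))"
  have evG: "eventually G sequentially"
    unfolding G_def
  proof (rule eventually_ball_finite)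
    show "finite ({0..<m} \<times> {0..<m})" by simp
    show "\<forall>p\<in>{0..<m} \<times> {0..<m}. eventually (\<lambda>n. \<exists>k. hdim C (xs ! fst p) ((Sob C ^^ n) (xs ! snd p)) = enat k \<and> real k \<le> real n powr (d - 1)) sequentially"
    proof
      fix p assume "p \<in> {0..<m} \<times> {0..<m}"
      hence "xs ! fst p \<in> Ob C" "xs ! snd p \<in> Ob C" using ob by auto
      with dT show "eventually (\<lambda>n. \<exists>k. hdim C (xs ! fst p) ((Sob C ^^ n) (xs ! snd p)) = enat k \<and> real k \<le> real n powr (d - 1)) sequentially"
        unfolding in_dT_def by (intro entry_bound) blast
    qed
  qed
  have bound: "logn n (rho C xs n) \<le> ereal (log (real n) (real m) + (d - 1))"
    if G: "G n" and n2: "n \<ge> 2" for n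
  proof -
    define A where "A = Amat C xs n (\<lambda>_ _. 0)"
    have Aeq: "Amat C xs n x = A" for x
      unfolding A_def Amat_def
    proof (rule eq_matI)
      fix i j assume "i < dim_row (mat (length xs) (length xs) (\<lambda>(i, j). case hdim C (xs ! i) ((Sob C ^^ n) (xs ! j)) of enat k \<Rightarrow> complex_of_real (real k) | \<infinity> \<Rightarrow> complex_of_real 0))"
        "j < dim_col (mat (length xs) (length xs) (\<lambda>(i, j). case hdim C (xs ! i) ((Sob C ^^ n) (xs ! j)) of enat k \<Rightarrow> complex_of_real (real k) | \<infinity> \<Rightarrow> complex_of_real 0))"
      hence ij: "i < m" "j < m" unfolding m_def by auto
      then obtain k where "hdim C (xs ! i) ((Sob C ^^ n) (xs ! j)) = enat k"
        using G unfolding G_def by fastforce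
      thus "mat (length xs) (length xs) (\<lambda>(i, j). case hdim C (xs ! i) ((Sob C ^^ n) (xs ! j)) of enat k \<Rightarrow> complex_of_real (real k) | \<infinity> \<Rightarrow> complex_of_real (x i j)) $$ (i, j) =
         mat (length xs) (length xs) (\<lambda>(i, j). case hdim C (xs ! i) ((Sob C ^^ n) (xs ! j)) of enat k \<Rightarrow> complex_of_real (real k) | \<infinity> \<Rightarrow> complex_of_real 0) $$ (i, j)"
        using ij unfolding m_def by simp
    qed auto
    have rho: "rho C xs n = ereal (spectral_radius A)"
      unfolding rho_def Aeq using all_to_infty_nonbot by (simp add: Liminf_const)
    have Ac: "A \<in> carrier_mat m m" unfolding A_def Amat_def m_def by simp
    have p: "real n powr (d - 1) > 0" using n2 by simp
    have sr: "spectral_radius A \<le> real m * real n powr (d - 1)"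
    proof (rule spec_bound[OF Ac m])
      fix i j assume ij: "i < m" "j < m"
      then obtain k where k: "hdim C (xs ! i) ((Sob C ^^ n) (xs ! j)) = enat k" "real k \<le> real n powr (d - 1)"
        using G unfolding G_def by fastforce
      show "norm (A $$ (i, j)) \<le> real n powr (d - 1)"
        using ij k unfolding A_def Amat_def m_def by simp
    qed
    have sr0: "spectral_radius A \<ge> 0"
      using spectral_radius_mem_max(1)[OF Ac m] by auto
    show ?thesis
    proof (cases "spectral_radius A = 0")
      case True
      thus ?thesis unfolding rho logn_def by (simp add: zero_ereal_def)
    next
      case False
      with sr0 have pos: "spectral_radius A > 0" by simp
      have "log (real n) (spectral_radius A) \<le> log (real n) (real m * real n powr (d - 1))"
        using pos sr n2 by (subst log_le_cancel_iff) auto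
      also have "\<dots> = log (real n) (real m) + (d - 1)"
        using m n2 p by (simp add: log_mult log_powr)
      finally show ?thesis
        unfolding rho logn_def using False by (simp add: zero_ereal_def)
    qed
  qed
  have "limsup (\<lambda>n. logn n (rho C xs n)) \<le> limsup (\<lambda>n. ereal (log (real n) (real m) + (d - 1)))"
  proof (rule Limsup_mono)
    show "eventually (\<lambda>n. logn n (rho C xs n) \<le> ereal (log (real n) (real m) + (d - 1))) sequentially"
      using evG eventually_ge_at_top[of 2] by eventually_elim (rule bound)
  qed
  also have "\<dots> = ereal (d - 1)"
  proof (rule lim_imp_Limsup)
    show "sequentially \<noteq> bot" by simp
    have "((\<lambda>n::nat. log (real n) (real m) + (d - 1)) \<longlongrightarrow> 0 + (d - 1)) sequentially"
    proof (intro tendsto_add tendsto_const)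
      show "((\<lambda>n::nat. log (real n) (real m)) \<longlongrightarrow> 0) sequentially"
        unfolding log_def by real_asymp
    qed
    thus "((\<lambda>n. ereal (log (real n) (real m) + (d - 1))) \<longlongrightarrow> ereal (d - 1)) sequentially"
      by (simp add: tendsto_ereal)
  qed
  finally show ?thesis .
qed

theorem theorem8p3:
  fixes C :: "('o, 'm, 'k::field) kcat"
  assumes "alg_closed TYPE('k)"
    and "pretriangulated C"
  shows "fpc C \<le> cx C"
  unfolding fpc_def cx_def
proof (rule Inf_greatest)
  fix e assume "e \<in> {ereal d |d. \<forall>X\<in>Ob C. in_dT C d X}"
  then obtain d where e: "e = ereal d" and dT: "\<forall>X\<in>Ob C. in_dT C d X" by auto
  have "fpg C \<le> ereal (d - 1)"
    unfolding fpg_def by (rule SUP_least) (use key dT in auto)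
  hence "fpg C + 1 \<le> ereal (d - 1) + 1" by (rule add_right_mono)
  thus "fpg C + 1 \<le> e" using e by simp
qed

end
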